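(* Let $M$ be an arithmetical list of $\mathbb{P}$ of reason $r\ge1$. There exists a real constant $\gamma_M$ such that, as $x\to\infty$, $$\prod_{p\le x,\,p\in M}\Big(1-\frac1p\Big)=\frac{e^{-\gamma_M}}{(\ln x)^{1/r}}+O\!\left(\frac{1}{(\ln x)^{1+1/r}}\right),\qquad \prod_{p\le x,\,p\in M}\Big(1-\frac1p\Big)^{-1}=e^{\gamma_M}(\ln x)^{1/r}+O\!\left((\ln x)^{1/r-1}\right).$$
   Context: Let $p_1=2<p_2=3<\dots$ be the primes in increasing order and $\mathbb{P}$ the set of primes. An arithmetical list of reason $r\ge1$ is a set $M=\{p_{r_0+jr}:j\ge0\}$ for some integer $1\le r_0\le r$. *)

theory Defs
  imports "HOL-Analysis.Analysis" "HOL-Library.Landau_Symbols" "HOL-Computational_Algebra.Primes"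
begin

text \<open>nth_prime k is the (k+1)-th prime in increasing order, so p_i = nth_prime (i - 1)
  for i \<ge> 1 (p_1 = 2).\<close>
definition nth_prime :: "nat \<Rightarrow> nat" where
  "nth_prime k = (THE p. prime p \<and> card {q. prime q \<and> q < p} = k)"

text \<open>Arithmetical list of reason r with starting index r0 (1 \<le> r0 \<le> r):
  {p_(r0 + j r) : j \<ge> 0}.\<close>
definition arith_list :: "nat \<Rightarrow> nat \<Rightarrow> nat set" where
  "arith_list r r0 = {nth_prime (r0 + j * r - 1) | j. True}"

end

theory Submission
  imports Defs "HOL-Number_Theory.Prime_Powers" "HOL-Real_Asymp.Real_Asymp"
begin


lemma card_less_enumerate:
  fixes S :: "nat set"
  assumes "infinite S"
  shows "card {q\<in>S. q < enumerate S m} = m"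
proof -
  have "{q\<in>S. q < enumerate S m} = enumerate S ` {..<m}"
  proof
    show "{q \<in> S. q < enumerate S m} \<subseteq> enumerate S ` {..<m}"
    proof
      fix q assume q: "q \<in> {q \<in> S. q < enumerate S m}"
      then obtain i where "q = enumerate S i" using range_enumerate[OF assms] by blast
      with q assms show "q \<in> enumerate S ` {..<m}" by auto
    qed
    show "enumerate S ` {..<m} \<subseteq> {q \<in> S. q < enumerate S m}"
      using assms by (auto intro: enumerate_in_set)
  qed
  moreover have "inj_on (enumerate S) {..<m}"
    using inj_enumerate[OF assms] by (meson inj_on_subset subset_UNIV)
  ultimately show ?thesis by (simp add: card_image)
qed

lemma infinite_primes_nat: "infinite {p::nat. prime p}"
  using primes_infinite by simp

lemma nth_prime_eq: "nth_prime k = enumerate {p::nat. prime p} k"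
  unfolding nth_prime_def
proof (rule the_equality)
  have "card {q. prime q \<and> q < enumerate {p::nat. prime p} k} = card {q\<in>{p. prime p}. q < enumerate {p::nat. prime p} k}"
    by simp
  also have "\<dots> = k" by (rule card_less_enumerate[OF infinite_primes_nat])
  finally show "prime (enumerate {p::nat. prime p} k) \<and> card {q. prime q \<and> q < enumerate {p::nat. prime p} k} = k"
    using enumerate_in_set[OF infinite_primes_nat] by auto
next
  fix p :: nat assume p: "prime p \<and> card {q. prime q \<and> q < p} = k"
  then obtain i where i: "p = enumerate {p::nat. prime p} i" using range_enumerate[OF infinite_primes_nat] by blast
  have "card {q\<in>{p. prime p}. q < enumerate {p::nat. prime p} i} = i"
    by (rule card_less_enumerate[OF infinite_primes_nat])
  with p i have "i = k" by simp
  with i show "p = enumerate {p::nat. prime p} k" by simp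
qed

lemma prime_nth_prime: "prime (nth_prime k)"
  using enumerate_in_set[OF infinite_primes_nat] nth_prime_eq by auto

lemma strict_mono_nth_prime: "strict_mono nth_prime"
  using strict_mono_enumerate[OF infinite_primes_nat] nth_prime_eq by (simp add: strict_mono_def)

lemma nth_prime_less_iff [simp]: "nth_prime m < nth_prime n \<longleftrightarrow> m < n"
  using strict_mono_nth_prime strict_mono_less by blast

lemma nth_prime_le_iff [simp]: "nth_prime m \<le> nth_prime n \<longleftrightarrow> m \<le> n"
  using strict_mono_nth_prime strict_mono_less_eq by blast

lemma nth_prime_inj [simp]: "nth_prime m = nth_prime n \<longleftrightarrow> m = n"
  by (metis nth_prime_le_iff order_antisym order_refl)

lemma prime_is_nth_prime: "prime p \<Longrightarrow> \<exists>k. p = nth_prime k"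
  using range_enumerate[OF infinite_primes_nat] nth_prime_eq by (metis (mono_tags, lifting) imageE mem_Collect_eq)

lemma nth_prime_ge: "nth_prime k \<ge> k + 2"
proof (induction k)
  case 0 then show ?case using prime_nth_prime[of 0] prime_ge_2_nat[of "nth_prime 0"] by simp
next
  case (Suc k)
  have "nth_prime k < nth_prime (Suc k)" by simp
  with Suc show ?case by linarith
qed



lemma tail_bound:
  fixes f h :: "nat \<Rightarrow> real"
  assumes bnd: "\<And>k. k \<ge> K \<Longrightarrow> \<bar>f k\<bar> \<le> h k - h (Suc k)"
    and lim: "h \<longlonglongrightarrow> 0"
  shows "\<exists>L. \<forall>N\<ge>K. \<bar>(\<Sum>k\<in>{K..<N}. f k) - L\<bar> \<le> h N"
proof -
  define g where "g k = f (k + K)" for k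
  define hh where "hh k = h (k + K)" for k
  have hhlim: "hh \<longlonglongrightarrow> 0" unfolding hh_def using lim by (rule LIMSEQ_ignore_initial_segment)
  have gb: "\<bar>g k\<bar> \<le> hh k - hh (Suc k)" for k
    unfolding g_def hh_def using bnd[of "k + K"] by simp
  have tel: "(\<lambda>k. hh (k + n) - hh (Suc (k + n))) sums (hh n)" for n
  proof -
    have "(\<lambda>k. hh (k + n)) \<longlonglongrightarrow> 0" using hhlim by (rule LIMSEQ_ignore_initial_segment)
    from telescope_sums'[OF this] show ?thesis by simp
  qed
  have sg: "summable g"
    by (rule summable_comparison_test[of _ "\<lambda>k. hh k - hh (Suc k)"])
       (use gb sums_summable[OF tel[of 0]] in auto)
  show ?thesis
  proof (intro exI allI impI)
    fix N assume N: "N \<ge> K"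
    define n where "n = N - K"
    have "(\<Sum>k\<in>{K..<N}. f k) = (\<Sum>k<n. g k)"
    proof -
      have "(\<Sum>k\<in>{K..<N}. f k) = (\<Sum>k\<in>{0..<N-K}. f (k + K))"
        using sum.atLeastLessThan_shift_0[of f K N] by (simp add: comp_def add.commute)
      then show ?thesis unfolding n_def g_def by (simp add: atLeast0LessThan)
    qed
    moreover have "suminf g = (\<Sum>k. g (k + n)) + (\<Sum>k<n. g k)"
      by (rule suminf_split_initial_segment[OF sg])
    moreover have "\<bar>\<Sum>k. g (k + n)\<bar> \<le> (\<Sum>k. hh (k + n) - hh (Suc (k + n)))"
      using norm_suminf_le[of "\<lambda>k. g (k + n)" "\<lambda>k. hh (k + n) - hh (Suc (k + n))"]
            gb sums_summable[OF tel[of n]] by auto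
    moreover have "(\<Sum>k. hh (k + n) - hh (Suc (k + n))) = h N"
      using sums_unique[OF tel[of n]] N unfolding hh_def n_def by simp
    ultimately show "\<bar>(\<Sum>k\<in>{K..<N}. f k) - suminf g\<bar> \<le> h N" by linarith
  qed
qed



definition theta :: "nat \<Rightarrow> real" where
  "theta n = (\<Sum>p\<in>{p. prime p \<and> p \<le> n}. ln (real p))"

lemma ln_prime_nonneg: "prime (p::nat) \<Longrightarrow> 0 \<le> ln (real p)"
  using prime_ge_1_nat[of p] by simp

lemma ln_prime_le: "prime (p::nat) \<Longrightarrow> p \<le> n \<Longrightarrow> ln (real p) \<le> ln (real n)"
  using prime_gt_0_nat[of p] by simp

lemma prod_primes_dvd:
  fixes N :: nat
  assumes "finite P" "\<And>p. p \<in> P \<Longrightarrow> prime p" "\<And>p. p \<in> P \<Longrightarrow> p dvd N"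
  shows "\<Prod>P dvd N"
  using assms
proof (induction P rule: finite_induct)
  case empty then show ?case by simp
next
  case (insert p F)
  have "coprime p (\<Prod>F)"
    by (rule prod_coprime_right) (use insert in \<open>auto intro: primes_coprime\<close>)
  then show ?case using insert by (simp add: divides_mult)
qed

lemma primes_dvd_central_binomial:
  "\<Prod>{p. prime p \<and> m < p \<and> p \<le> 2*m} dvd (2*m choose m)"
proof (rule prod_primes_dvd)
  fix p assume p: "p \<in> {p. prime p \<and> m < p \<and> p \<le> 2*m}"
  then have pr: "prime p" by simp
  have "p dvd fact (2*m)" using p prime_dvd_fact_iff[OF pr] by simp
  also have "fact (2*m) = fact m * fact m * (2*m choose m)"
    using binomial_fact_lemma[of m "2*m"] by simp
  finally have "p dvd fact m * fact m * (2*m choose m)" .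
  moreover have "\<not> p dvd fact m" using p prime_dvd_fact_iff[OF pr] by simp
  ultimately show "p dvd (2*m choose m)" using pr by (simp add: prime_dvd_mult_iff)
qed auto

lemma theta_double: "theta (2*m) - theta m \<le> 2 * m * ln 2"
proof -
  have split: "{p. prime p \<and> p \<le> 2*m} = {p. prime p \<and> p \<le> m} \<union> {p. prime p \<and> m < p \<and> p \<le> 2*m}"
    by auto
  have "theta (2*m) = theta m + (\<Sum>p\<in>{p. prime p \<and> m < p \<and> p \<le> 2*m}. ln (real p))"
    unfolding theta_def split by (subst sum.union_disjoint) auto
  also have "(\<Sum>p\<in>{p. prime p \<and> m < p \<and> p \<le> 2*m}. ln (real p)) = ln (real (\<Prod>{p. prime p \<and> m < p \<and> p \<le> 2*m}))"
  proof -
    have "ln (real (\<Prod>{p. prime p \<and> m < p \<and> p \<le> 2*m})) = ln (\<Prod>p\<in>{p. prime p \<and> m < p \<and> p \<le> 2*m}. real p)"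
      by simp
    also have "\<dots> = (\<Sum>p\<in>{p. prime p \<and> m < p \<and> p \<le> 2*m}. ln (real p))"
      by (subst ln_prod) (auto simp: prime_gt_0_nat)
    finally show ?thesis by simp
  qed
  also have "\<dots> \<le> ln (real (2*m choose m))"
  proof -
    have "\<Prod>{p. prime p \<and> m < p \<and> p \<le> 2*m} \<le> (2*m choose m)"
      by (rule dvd_imp_le[OF primes_dvd_central_binomial]) simp
    then have le: "real (\<Prod>{p. prime p \<and> m < p \<and> p \<le> 2*m}) \<le> real (2*m choose m)"
      by (simp only: of_nat_le_iff)
    have "\<Prod>{p. prime p \<and> m < p \<and> p \<le> 2*m} > 0"
      by (rule prod_pos) (auto simp: prime_gt_0_nat)
    then have pos: "real (\<Prod>{p. prime p \<and> m < p \<and> p \<le> 2*m}) > 0"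
      by (simp only: of_nat_0_less_iff)
    show ?thesis using le pos by (metis ln_le_cancel_iff order_less_le_trans)
  qed
  also have "\<dots> \<le> ln (2 ^ (2*m))"
  proof -
    have "(2*m choose m) \<le> 2 ^ (2*m)" by (rule binomial_le_pow2)
    then have "real (2*m choose m) \<le> 2 ^ (2*m)" by (metis of_nat_le_iff of_nat_numeral of_nat_power)
    moreover have "(2*m choose m) > 0" by simp
    ultimately show ?thesis by simp
  qed
  also have "\<dots> = 2 * m * ln 2" by (simp add: ln_realpow)
  finally show ?thesis by simp
qed

lemma theta_mono: "m \<le> n \<Longrightarrow> theta m \<le> theta n"
  unfolding theta_def by (rule sum_mono2) (auto intro: ln_prime_nonneg)

lemma theta_nonneg: "theta n \<ge> 0"
  unfolding theta_def by (rule sum_nonneg) (auto intro: ln_prime_nonneg)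

lemma theta_triv: "theta n \<le> n * ln n"
proof -
  have "theta n \<le> (\<Sum>p\<in>{p. prime p \<and> p \<le> n}. ln (real n))"
    unfolding theta_def by (rule sum_mono) (simp add: ln_prime_le)
  also have "\<dots> = card {p. prime p \<and> p \<le> n} * ln n" by simp
  also have "\<dots> \<le> n * ln n"
  proof (rule mult_right_mono)
    have "{p. prime p \<and> p \<le> n} \<subseteq> {1..n}" using prime_ge_1_nat by auto
    then have "card {p. prime p \<and> p \<le> n} \<le> card {1..n}" by (rule card_mono[rotated]) simp
    then show "real (card {p. prime p \<and> p \<le> n}) \<le> real n" by simp
    show "0 \<le> ln (real n)" by (cases "n = 0") auto
  qed
  finally show ?thesis .
qed

lemma theta_le: "theta n \<le> 4 * ln 2 * n"
proof (induction n rule: less_induct)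
  case (less n)
  show ?case
  proof (cases "n \<le> 2")
    case True
    have "theta n \<le> n * ln n" by (rule theta_triv)
    also have "\<dots> \<le> n * ln 2"
      using True by (cases "n = 0") (auto intro!: mult_left_mono)
    also have "\<dots> \<le> 4 * ln 2 * n" by simp
    finally show ?thesis .
  next
    case False
    define m where "m = (n + 1) div 2"
    have mn: "m < n" "n \<le> 2*m" "2 * real m \<le> n + 1" using False unfolding m_def by linarith+
    have "theta n \<le> theta (2*m)" using mn by (intro theta_mono) simp
    also have "\<dots> \<le> theta m + 2 * m * ln 2" using theta_double[of m] by simp
    also have "\<dots> \<le> 4 * ln 2 * m + 2 * m * ln 2" using less.IH[OF mn(1)] by (simp add: algebra_simps)
    also have "\<dots> = 3 * ln 2 * (2 * m)" by simp
    also have "\<dots> \<le> 3 * ln 2 * (n + 1)" using mn(3) by (intro mult_left_mono) auto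
    also have "\<dots> \<le> 4 * ln 2 * n" using False by (simp add: algebra_simps)
    finally show ?thesis .
  qed
qed



lemma card_multiples:
  assumes "d > 0"
  shows "card {m\<in>{1..n}. d dvd m} = n div d"
proof -
  have "{m\<in>{1..n}. d dvd m} = (\<lambda>k. d * k) ` {1..n div d}"
  proof
    show "{m \<in> {1..n}. d dvd m} \<subseteq> (*) d ` {1..n div d}"
    proof
      fix m assume m: "m \<in> {m \<in> {1..n}. d dvd m}"
      then obtain k where k: "m = d * k" by auto
      with m assms have "1 \<le> k" "k \<le> n div d"
        by (auto simp: less_eq_div_iff_mult_less_eq mult.commute intro: Nat.gr0I)
      with k show "m \<in> (*) d ` {1..n div d}" by auto
    qed
    show "(*) d ` {1..n div d} \<subseteq> {m \<in> {1..n}. d dvd m}"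
      using assms by (auto simp: less_eq_div_iff_mult_less_eq mult.commute)
  qed
  moreover have "inj_on (\<lambda>k. d * k) {1..n div d}" using assms by (auto simp: inj_on_def)
  ultimately show ?thesis by (simp add: card_image)
qed

lemma ln_fact_mangoldt:
  "ln (fact n :: real) = (\<Sum>d\<in>{1..n}. mangoldt d * real (n div d))"
proof -
  have "ln (fact n :: real) = ln (\<Prod>m\<in>{1..n}. real m)" by (simp add: fact_prod)
  also have "\<dots> = (\<Sum>m\<in>{1..n}. ln (real m))" by (subst ln_prod) auto
  also have "\<dots> = (\<Sum>m\<in>{1..n}. \<Sum>d\<in>{d\<in>{1..n}. d dvd m}. mangoldt d)"
  proof (rule sum.cong[OF refl])
    fix m assume m: "m \<in> {1..n}"
    have "{d. d dvd m} = {d\<in>{1..n}. d dvd m}" using m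
      by (auto intro: Nat.gr0I dest: dvd_imp_le)
    then show "ln (real m) = (\<Sum>d\<in>{d\<in>{1..n}. d dvd m}. mangoldt d)"
      using mangoldt_sum[of m, where 'a=real] m by simp
  qed
  also have "\<dots> = (\<Sum>d\<in>{1..n}. \<Sum>m\<in>{m\<in>{1..n}. d dvd m}. mangoldt d)"
    by (rule sum.swap_restrict) auto
  also have "\<dots> = (\<Sum>d\<in>{1..n}. mangoldt d * real (n div d))"
  proof (rule sum.cong[OF refl])
    fix d assume "d \<in> {1..n}"
    then show "(\<Sum>m\<in>{m\<in>{1..n}. d dvd m}. mangoldt d) = mangoldt d * real (n div d)"
      using card_multiples[of d n] by simp
  qed
  finally show ?thesis .
qed

lemma pow_le_fact_exp: "real n ^ n \<le> fact n * exp (real n)"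
proof (induction n)
  case 0 then show ?case by simp
next
  case (Suc n)
  have "(real n + 1) ^ n \<le> exp 1 * real n ^ n"
  proof (cases "n = 0")
    case False
    then have "(1 + 1 / real n) ^ n \<le> exp 1"
      using exp_ge_one_plus_x_over_n_power_n[of n 1] by simp
    moreover have "(real n + 1) ^ n = (1 + 1 / real n) ^ n * real n ^ n"
      using False by (simp add: field_simps flip: power_mult_distrib)
    ultimately show ?thesis by (simp add: mult_right_mono)
  qed simp
  then have "(real n + 1) * (real n + 1) ^ n \<le> (real n + 1) * (exp 1 * real n ^ n)"
    by (intro mult_left_mono) auto
  then have "real (Suc n) ^ Suc n \<le> (real n + 1) * (exp 1 * real n ^ n)"
    by (simp add: add.commute)
  also have "\<dots> \<le> (real n + 1) * (exp 1 * (fact n * exp (real n)))"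
    using Suc.IH by (intro mult_left_mono) auto
  also have "\<dots> = fact (Suc n) * exp (real (Suc n))"
    by (simp add: exp_add algebra_simps)
  finally show ?case .
qed

lemma ln_fact_lower: "real n * ln (real n) - real n \<le> ln (fact n :: real)"
proof (cases "n = 0")
  case False
  have "ln (real n ^ n) \<le> ln (fact n * exp (real n))"
    using pow_le_fact_exp[of n] False by (subst ln_le_cancel_iff) auto
  then show ?thesis using False by (simp add: ln_realpow ln_mult)
qed simp

lemma ln_fact_upper: "ln (fact n :: real) \<le> real n * ln (real n)"
proof (cases "n = 0")
  case False
  have "(fact n :: real) \<le> real (n ^ n)" by (rule fact_le_power)
  then have "ln (fact n :: real) \<le> ln (real n ^ n)" using False by (subst ln_le_cancel_iff) auto
  then show ?thesis using False by (simp add: ln_realpow)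
qed simp



lemma summable_ln_sq: "summable (\<lambda>n::nat. ln (real n) / real n ^ 2)"
proof (rule summable_comparison_test_bigo)
  show "summable (\<lambda>n. norm (real n powr (-3/2)))"
    using summable_real_powr_iff[of "-3/2"] by simp
  show "(\<lambda>n::nat. ln (real n) / real n ^ 2) \<in> O(\<lambda>n. real n powr (-3/2))"
    by real_asymp
qed

lemma ln_sq_nonneg: "0 \<le> ln (real m) / real m ^ 2"
  by (cases "m = 0") auto

lemma geom_tail_aux:
  fixes x :: real
  assumes "0 \<le> x" "x \<le> 1/2"
  shows "(\<Sum>k\<in>{2..Suc n}. x ^ k) \<le> 2 * x^2 - 2 * x ^ (n + 2)"
proof (induction n)
  case 0 then show ?case by (simp add: power2_eq_square)
next
  case (Suc n)
  have "{2..Suc (Suc n)} = insert (Suc (Suc n)) {2..Suc n}" by auto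
  then have "(\<Sum>k\<in>{2..Suc (Suc n)}. x ^ k) = x ^ (n + 2) + (\<Sum>k\<in>{2..Suc n}. x ^ k)" by simp
  also have "\<dots> \<le> x ^ (n + 2) + 2 * x^2 - 2 * x ^ (n + 2)" using Suc by simp
  also have "\<dots> \<le> 2 * x^2 - 2 * x ^ (Suc n + 2)"
  proof -
    have "2 * x ^ (Suc n + 2) = (2 * x) * x ^ (n + 2)" by simp
    also have "\<dots> \<le> 1 * x ^ (n + 2)" using assms by (intro mult_right_mono) auto
    finally show ?thesis by simp
  qed
  finally show ?case .
qed

lemma geom_tail:
  fixes x :: real
  assumes "0 \<le> x" "x \<le> 1/2"
  shows "(\<Sum>k\<in>{2..n}. x ^ k) \<le> 2 * x^2"
proof -
  have "(\<Sum>k\<in>{2..n}. x ^ k) \<le> (\<Sum>k\<in>{2..Suc n}. x ^ k)"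
    using assms by (intro sum_mono2) auto
  also have "\<dots> \<le> 2 * x^2 - 2 * x ^ (n + 2)" by (rule geom_tail_aux[OF assms])
  also have "\<dots> \<le> 2 * x^2" using assms by simp
  finally show ?thesis .
qed

definition Aw :: "nat \<Rightarrow> real" where
  "Aw n = (\<Sum>p\<in>{p. prime p \<and> p \<le> n}. ln (real p) / real p)"

definition Hw :: "nat \<Rightarrow> real" where
  "Hw n = (\<Sum>d\<in>{d\<in>{1..n}. \<not> prime d}. mangoldt d / real d)"

lemma mangoldt_real_prime: "prime p \<Longrightarrow> (mangoldt p :: real) = ln (real p)"
  by simp

lemma Hw_bound: "Hw n \<le> 2 * suminf (\<lambda>m::nat. ln (real m) / real m ^ 2)"
proof -
  define P where "P = {p. prime p \<and> p \<le> n}"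
  define K where "K = {2..n}"
  define D where "D = {d\<in>{1..n}. \<not> prime d \<and> primepow d}"
  have finP: "finite P" unfolding P_def by simp
  have "Hw n = (\<Sum>d\<in>D. mangoldt d / real d)"
    unfolding Hw_def D_def
    by (rule sum.mono_neutral_right) (auto simp: mangoldt_def)
  also have "\<dots> \<le> (\<Sum>d\<in>(\<lambda>(p,k). p ^ k) ` (P \<times> K). mangoldt d / real d)"
  proof (rule sum_mono2)
    show "finite ((\<lambda>(p,k). p ^ k) ` (P \<times> K))" using finP unfolding K_def by simp
    show "D \<subseteq> (\<lambda>(p,k). p ^ k) ` (P \<times> K)"
    proof
      fix d assume d: "d \<in> D"
      then obtain p k where pk: "prime p" "k > 0" "d = p ^ k" unfolding D_def primepow_def by auto
      have "k \<noteq> 1" using d pk unfolding D_def by auto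
      with pk have k2: "k \<ge> 2" by simp
      have dn: "d \<le> n" using d unfolding D_def by simp
      have "p \<le> p ^ k" using pk prime_gt_0_nat[of p] by (simp add: self_le_power)
      then have "p \<le> n" using dn pk by simp
      moreover have "k < 2 ^ k" by (rule less_exp)
      moreover have "2 ^ k \<le> p ^ k" using pk prime_ge_2_nat[of p] by (simp add: power_mono)
      ultimately have "k \<le> n" using dn pk by linarith
      with \<open>p \<le> n\<close> have "p \<in> P" "k \<in> K" using pk k2 dn unfolding P_def K_def by auto
      then show "d \<in> (\<lambda>(p,k). p ^ k) ` (P \<times> K)" using pk by auto
    qed
    show "\<And>x. x \<in> (\<lambda>(p,k). p ^ k) ` (P \<times> K) - D \<Longrightarrow> 0 \<le> mangoldt x / real x"
      using mangoldt_nonneg by simp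
  qed
  also have "\<dots> = (\<Sum>(p,k)\<in>P \<times> K. mangoldt (p ^ k) / real (p ^ k))"
  proof (subst sum.reindex)
    show "inj_on (\<lambda>(p,k). p ^ k) (P \<times> K)"
      unfolding inj_on_def P_def K_def by (auto simp: prime_power_inj'')
  qed (simp add: case_prod_unfold)
  also have "\<dots> = (\<Sum>p\<in>P. \<Sum>k\<in>K. ln (real p) * (1 / real p) ^ k)"
    unfolding sum.cartesian_product[symmetric]
    by (intro sum.cong refl) (auto simp: P_def K_def power_divide)
  also have "\<dots> \<le> (\<Sum>p\<in>P. ln (real p) * (2 * (1 / real p)^2))"
  proof (rule sum_mono)
    fix p assume p: "p \<in> P"
    then have pp: "prime p" unfolding P_def by simp
    have "real p \<ge> 2" using prime_ge_2_nat[OF pp] by simp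
    then have x: "0 \<le> 1 / real p" "1 / real p \<le> 1/2" by auto
    have "(\<Sum>k\<in>K. ln (real p) * (1 / real p) ^ k) = ln (real p) * (\<Sum>k\<in>K. (1 / real p) ^ k)"
      by (simp add: sum_distrib_left)
    also have "\<dots> \<le> ln (real p) * (2 * (1 / real p)^2)"
      unfolding K_def by (intro mult_left_mono geom_tail x ln_prime_nonneg pp)
    finally show "(\<Sum>k\<in>K. ln (real p) * (1 / real p) ^ k) \<le> ln (real p) * (2 * (1 / real p)^2)" .
  qed
  also have "\<dots> = 2 * (\<Sum>p\<in>P. ln (real p) / real p ^ 2)"
    by (simp add: sum_distrib_left power_divide mult.commute mult.left_commute)
  also have "(\<Sum>p\<in>P. ln (real p) / real p ^ 2) \<le> (\<Sum>m\<in>{..n}. ln (real m) / real m ^ 2)"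
    unfolding P_def by (rule sum_mono2) (auto simp: ln_sq_nonneg)
  also have "\<dots> \<le> suminf (\<lambda>m::nat. ln (real m) / real m ^ 2)"
    by (rule sum_le_suminf[OF summable_ln_sq]) (auto simp: ln_sq_nonneg)
  finally show ?thesis by simp
qed

lemma real_div_ge: "p > 0 \<Longrightarrow> real n / real p - 1 \<le> real (n div p)"
proof -
  assume p: "p > 0"
  have "real n = real p * real (n div p) + real (n mod p)"
    by (metis div_mult_mod_eq of_nat_add of_nat_mult mult.commute)
  moreover have "real (n mod p) < real p" using p by simp
  ultimately have "real n < real p * (real (n div p) + 1)" by (simp add: algebra_simps)
  then have "real n / real p < real (n div p) + 1" using p by (simp add: field_simps)
  then show ?thesis by simp
qed

lemma real_div_le: "p > 0 \<Longrightarrow> real (n div p) \<le> real n / real p"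
  by (rule of_nat_div_le_of_nat)

lemma mertens1_upper: "n \<ge> 1 \<Longrightarrow> Aw n \<le> ln (real n) + 4 * ln 2"
proof -
  assume n: "n \<ge> 1"
  define P where "P = {p. prime p \<and> p \<le> n}"
  have PP: "P \<subseteq> {1..n}" unfolding P_def using prime_ge_1_nat by auto
  have "real n * Aw n - theta n = (\<Sum>p\<in>P. ln (real p) * (real n / real p - 1))"
    unfolding Aw_def theta_def P_def[symmetric]
    by (simp add: sum_distrib_left sum_subtractf algebra_simps)
  also have "\<dots> \<le> (\<Sum>p\<in>P. mangoldt p * real (n div p))"
  proof (rule sum_mono)
    fix p assume "p \<in> P"
    then have pp: "prime p" unfolding P_def by simp
    show "ln (real p) * (real n / real p - 1) \<le> mangoldt p * real (n div p)"
      using pp mult_left_mono[OF real_div_ge[OF prime_gt_0_nat[OF pp], of n] ln_prime_nonneg[OF pp]] by simp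
  qed
  also have "\<dots> \<le> (\<Sum>d\<in>{1..n}. mangoldt d * real (n div d))"
    by (rule sum_mono2) (use PP in \<open>auto intro!: mult_nonneg_nonneg mangoldt_nonneg\<close>)
  also have "\<dots> = ln (fact n)" by (simp add: ln_fact_mangoldt)
  also have "\<dots> \<le> real n * ln (real n)" by (rule ln_fact_upper)
  finally have "real n * Aw n \<le> real n * ln (real n) + theta n" by simp
  also have "\<dots> \<le> real n * ln (real n) + 4 * ln 2 * real n" using theta_le[of n] by simp
  also have "\<dots> = real n * (ln (real n) + 4 * ln 2)" by (simp add: algebra_simps)
  finally show ?thesis using n by simp
qed

lemma mertens1_lower: "n \<ge> 1 \<Longrightarrow> ln (real n) - 1 - 2 * suminf (\<lambda>m::nat. ln (real m) / real m ^ 2) \<le> Aw n"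
proof -
  assume n: "n \<ge> 1"
  define P where "P = {p. prime p \<and> p \<le> n}"
  have split: "{1..n} = P \<union> {d\<in>{1..n}. \<not> prime d}" unfolding P_def using prime_ge_1_nat by auto
  have "real n * ln (real n) - real n \<le> ln (fact n)" by (rule ln_fact_lower)
  also have "\<dots> = (\<Sum>d\<in>{1..n}. mangoldt d * real (n div d))" by (simp add: ln_fact_mangoldt)
  also have "\<dots> \<le> (\<Sum>d\<in>{1..n}. mangoldt d * (real n / real d))"
  proof (rule sum_mono)
    fix d assume "d \<in> {1..n}"
    then have "d > 0" by simp
    show "mangoldt d * real (n div d) \<le> mangoldt d * (real n / real d)"
      by (rule mult_left_mono[OF real_div_le[OF \<open>d > 0\<close>] mangoldt_nonneg])
  qed
  also have "\<dots> = real n * (\<Sum>d\<in>{1..n}. mangoldt d / real d)"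
    by (simp add: sum_distrib_left mult.commute mult.left_commute)
  also have "(\<Sum>d\<in>{1..n}. mangoldt d / real d) = (\<Sum>d\<in>P. mangoldt d / real d) + Hw n"
    unfolding Hw_def by (subst split, subst sum.union_disjoint) (auto simp: P_def)
  also have "(\<Sum>d\<in>P. mangoldt d / real d) = Aw n"
    unfolding Aw_def P_def by (intro sum.cong refl) simp
  finally have "real n * ln (real n) - real n \<le> real n * (Aw n + Hw n)" .
  then have "real n * (ln (real n) - 1) \<le> real n * (Aw n + Hw n)" by (simp add: right_diff_distrib)
  then have "ln (real n) - 1 \<le> Aw n + Hw n" using n by (simp add: mult_le_cancel_left_pos)
  then show ?thesis using Hw_bound[of n] by simp
qed

lemma mertens1: "\<exists>C. \<forall>n\<ge>1. \<bar>Aw n - ln (real n)\<bar> \<le> C"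
proof (intro exI allI impI)
  fix n :: nat assume n: "n \<ge> 1"
  define S where "S = suminf (\<lambda>m::nat. ln (real m) / real m ^ 2)"
  have "Aw n \<le> ln (real n) + 4 * ln 2" by (rule mertens1_upper[OF n])
  moreover have "ln (real n) - 1 - 2 * S \<le> Aw n" unfolding S_def by (rule mertens1_lower[OF n])
  ultimately have a: "Aw n - ln (real n) \<le> 4 * ln 2" and b: "ln (real n) - Aw n \<le> 1 + 2 * S" by linarith+
  have "ln (2::real) > 0" by simp
  then show "\<bar>Aw n - ln (real n)\<bar> \<le> 4 * ln 2 + \<bar>1 + 2 * S\<bar>"
    using a b abs_ge_self[of "1 + 2 * S"] abs_ge_zero[of "1 + 2 * S"] unfolding abs_le_iff by linarith
qed



definition Sr :: "nat \<Rightarrow> real" where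
  "Sr n = (\<Sum>p\<in>{p. prime p \<and> p \<le> n}. 1 / real p)"

lemma primes_le_Suc: "{p. prime p \<and> p \<le> Suc n} =
   (if prime (Suc n) then insert (Suc n) {p. prime p \<and> p \<le> n} else {p. prime p \<and> p \<le> n})"
  by (auto simp: le_Suc_eq)

lemma Aw_Suc: "Aw (Suc n) = Aw n + (if prime (Suc n) then ln (real (Suc n)) / real (Suc n) else 0)"
  unfolding Aw_def by (subst primes_le_Suc) auto

lemma Sr_Suc: "Sr (Suc n) = Sr n + (if prime (Suc n) then 1 / real (Suc n) else 0)"
  unfolding Sr_def by (subst primes_le_Suc) auto

lemma Aw_0: "Aw 0 = 0" and Aw_1: "Aw 1 = 0"
  unfolding Aw_def by (auto simp: le_Suc_eq prime_ge_2_nat intro!: sum.neutral dest: prime_ge_2_nat)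

lemma Sr_1: "Sr 1 = 0"
  unfolding Sr_def by (auto intro!: sum.neutral dest: prime_ge_2_nat)

lemma abel_Sr:
  "Sr (Suc N) = Aw (Suc N) / ln (real (Suc N)) +
     (\<Sum>k\<in>{1..<Suc N}. Aw k * (1 / ln (real k) - 1 / ln (real (Suc k))))"
proof (induction N)
  case 0 then show ?case using Sr_1 Aw_1 by simp
next
  case (Suc N)
  have ln2: "ln (real (Suc (Suc N))) > 0" by simp
  have "{1..<Suc (Suc N)} = insert (Suc N) {1..<Suc N}" by auto
  then have sum_eq: "(\<Sum>k\<in>{1..<Suc (Suc N)}. Aw k * (1 / ln (real k) - 1 / ln (real (Suc k)))) =
      Aw (Suc N) * (1 / ln (real (Suc N)) - 1 / ln (real (Suc (Suc N)))) +
      (\<Sum>k\<in>{1..<Suc N}. Aw k * (1 / ln (real k) - 1 / ln (real (Suc k))))" by simp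
  have "Aw (Suc (Suc N)) / ln (real (Suc (Suc N))) =
      Aw (Suc N) / ln (real (Suc (Suc N))) + (if prime (Suc (Suc N)) then 1 / real (Suc (Suc N)) else 0)"
    using ln2 by (subst Aw_Suc) (auto simp: add_divide_distrib)
  then show ?case using Suc.IH sum_eq Sr_Suc[of "Suc N"] by (simp add: algebra_simps)
qed

lemma abel_Sr2:
  assumes "N \<ge> 2"
  shows "Sr N = Aw N / ln (real N) + (\<Sum>k\<in>{2..<N}. Aw k * (1 / ln (real k) - 1 / ln (real (Suc k))))"
proof -
  obtain M where M: "N = Suc M" "M \<ge> 1" using assms by (cases N) auto
  have "{1..<N} = insert 1 {2..<N}" using assms by auto
  then have "(\<Sum>k\<in>{1..<N}. Aw k * (1 / ln (real k) - 1 / ln (real (Suc k)))) =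
     (\<Sum>k\<in>{2..<N}. Aw k * (1 / ln (real k) - 1 / ln (real (Suc k))))" using Aw_1 by simp
  then show ?thesis using abel_Sr[of M] M by simp
qed

lemma u_bounds:
  fixes k :: nat
  assumes k: "k \<ge> 2"
  defines "u \<equiv> 1 - ln (real k) / ln (real (Suc k))"
  shows "0 \<le> u" "u \<le> 1/2" "u \<le> 1 / real k"
    "ln (ln (real (Suc k))) - ln (ln (real k)) = - ln (1 - u)"
proof -
  have lk: "ln (real k) > 0" using k by simp
  have lk1: "ln (real (Suc k)) > ln (real k)" using k by simp
  have L0: "ln (real (Suc k)) > 0" using lk lk1 by linarith
  have lk3: "ln (real (Suc k)) \<ge> 1"
  proof -
    have "exp 1 \<le> real (Suc k)" using exp_le k by simp
    then have "ln (exp 1) \<le> ln (real (Suc k))" by (subst ln_le_cancel_iff) auto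
    then show ?thesis by simp
  qed
  have u_alt: "u = (ln (real (Suc k)) - ln (real k)) / ln (real (Suc k))"
    unfolding u_def using L0 by (simp add: diff_divide_distrib)
  show "0 \<le> u" unfolding u_alt using lk lk1 by simp
  have "ln (real (Suc k)) \<le> 2 * ln (real k)"
  proof -
    have "2*k \<le> k*k" using mult_le_mono1[OF k, of k] by simp
    then have "Suc k \<le> k*k" using k by linarith
    then have "Suc k \<le> k^2" by (simp add: power2_eq_square)
    then have "real (Suc k) \<le> real k ^ 2" by (metis of_nat_le_iff of_nat_power)
    then have "ln (real (Suc k)) \<le> ln (real k ^ 2)" using k by (subst ln_le_cancel_iff) auto
    then show ?thesis using k by (simp add: ln_realpow)
  qed
  then show "u \<le> 1/2" unfolding u_alt using L0 by (simp add: divide_le_eq)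
  have q: "real (Suc k) / real k = 1 + 1 / real k" using k by (simp add: field_simps)
  have "ln (real (Suc k)) - ln (real k) = ln (1 + 1 / real k)"
    using k q ln_div[of "real (Suc k)" "real k"] by simp
  also have "\<dots> \<le> 1 / real k" by (rule ln_add_one_self_le_self) simp
  finally have num: "ln (real (Suc k)) - ln (real k) \<le> 1 / real k" .
  have "u \<le> (ln (real (Suc k)) - ln (real k)) / 1"
    unfolding u_alt by (rule divide_left_mono) (use lk3 lk1 k in auto)
  with num show "u \<le> 1 / real k" by simp
  have "1 - u = ln (real k) / ln (real (Suc k))" unfolding u_def by simp
  then have "- ln (1 - u) = ln (ln (real (Suc k))) - ln (ln (real k))"
    using lk L0 by (simp add: ln_div)
  then show "ln (ln (real (Suc k))) - ln (ln (real k)) = - ln (1 - u)" by simp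
qed

lemma v_bounds:
  fixes u :: real
  assumes "0 \<le> u" "u \<le> 1/2"
  shows "0 \<le> - ln (1 - u) - u" "- ln (1 - u) - u \<le> 2 * u^2"
proof -
  have "ln (1 - u) \<le> (1 - u) - 1" using assms by (intro ln_le_minus_one) auto
  then show "0 \<le> - ln (1 - u) - u" by simp
  have "- ln (1 - u) = ln (1 / (1 - u))" using assms by (simp add: ln_div)
  also have "\<dots> \<le> 1 / (1 - u) - 1" using assms by (intro ln_le_minus_one) auto
  finally have "- ln (1 - u) - u \<le> 1 / (1 - u) - 1 - u" by simp
  also have "\<dots> = u^2 / (1 - u)" using assms by (simp add: field_simps power2_eq_square)
  also have "\<dots> \<le> u^2 / (1/2)" using assms by (intro divide_left_mono) auto
  finally show "- ln (1 - u) - u \<le> 2 * u^2" by simp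
qed

lemma mertens2: "\<exists>B E. \<forall>N\<ge>2. \<bar>Sr N - ln (ln (real N)) - B\<bar> \<le> E / ln (real N)"
proof -
  obtain C where C: "\<And>n. n \<ge> 1 \<Longrightarrow> \<bar>Aw n - ln (real n)\<bar> \<le> C" using mertens1 by blast
  have C0: "C \<ge> 0" using C[of 1] by simp
  define \<delta> where "\<delta> k = 1 / ln (real k) - 1 / ln (real (Suc k))" for k :: nat
  define R where "R k = Aw k - ln (real k)" for k :: nat
  define u where "u k = 1 - ln (real k) / ln (real (Suc k))" for k :: nat
  define v where "v k = - ln (1 - u k) - u k" for k :: nat
  have \<delta>0: "\<delta> k \<ge> 0" if "k \<ge> 2" for k
    unfolding \<delta>_def using that by (simp add: frac_le)
  have "\<exists>L. \<forall>N\<ge>2. \<bar>(\<Sum>k\<in>{2..<N}. R k * \<delta> k) - L\<bar> \<le> C / ln (real N)"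
  proof (rule tail_bound)
    fix k :: nat assume k: "k \<ge> 2"
    have "\<bar>R k * \<delta> k\<bar> = \<bar>R k\<bar> * \<delta> k" using \<delta>0[OF k] by (simp add: abs_mult)
    also have "\<dots> \<le> C * \<delta> k" using C[of k] k \<delta>0[OF k] unfolding R_def by (intro mult_right_mono) auto
    also have "\<dots> = C / ln (real k) - C / ln (real (Suc k))" unfolding \<delta>_def by (simp add: algebra_simps)
    finally show "\<bar>R k * \<delta> k\<bar> \<le> C / ln (real k) - C / ln (real (Suc k))" .
  next
    show "(\<lambda>k. C / ln (real k)) \<longlonglongrightarrow> 0" by real_asymp
  qed
  then obtain L1 where L1: "\<And>N. N \<ge> 2 \<Longrightarrow> \<bar>(\<Sum>k\<in>{2..<N}. R k * \<delta> k) - L1\<bar> \<le> C / ln (real N)" by blast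
  have "\<exists>L. \<forall>N\<ge>2. \<bar>(\<Sum>k\<in>{2..<N}. v k) - L\<bar> \<le> 4 / real N"
  proof (rule tail_bound)
    fix k :: nat assume k: "k \<ge> 2"
    note ub = u_bounds[OF k, folded u_def]
    have "\<bar>v k\<bar> = v k" using v_bounds(1)[OF ub(1,2)] unfolding v_def by simp
    also have "\<dots> \<le> 2 * (u k)^2" using v_bounds(2)[OF ub(1,2)] unfolding v_def by simp
    also have "\<dots> \<le> 2 * (1 / real k)^2" using ub(1,3) by (intro mult_left_mono power_mono) auto
    also have "\<dots> \<le> 4 / real k - 4 / real (Suc k)"
    proof -
      have k0: "real k > 0" "real k + 1 > 0" using k by auto
      have "4 / real k - 4 / real (Suc k) = 4 / (real k * (real k + 1))"
        using k0 by (simp add: field_simps)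
      moreover have "2 * (1 / real k)^2 = 4 / (2 * real k * real k)" by (simp add: power2_eq_square)
      moreover have "4 / (2 * real k * real k) \<le> 4 / (real k * (real k + 1))"
      proof (rule frac_le)
        show "real k * (real k + 1) \<le> 2 * real k * real k"
          using k0 k by (simp add: algebra_simps)
      qed (use k0 in auto)
      ultimately show ?thesis by simp
    qed
    finally show "\<bar>v k\<bar> \<le> 4 / real k - 4 / real (Suc k)" .
  next
    show "(\<lambda>k. 4 / real k) \<longlonglongrightarrow> 0" by real_asymp
  qed
  then obtain L2 where L2: "\<And>N. N \<ge> 2 \<Longrightarrow> \<bar>(\<Sum>k\<in>{2..<N}. v k) - L2\<bar> \<le> 4 / real N" by blast
  define B where "B = 1 - ln (ln 2) - L2 + L1"
  show ?thesis
  proof (intro exI allI impI)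
    fix N :: nat assume N: "N \<ge> 2"
    have lnN: "ln (real N) > 0" using N by simp
    have "(\<Sum>k\<in>{2..<N}. Aw k * \<delta> k) = (\<Sum>k\<in>{2..<N}. u k + R k * \<delta> k)"
    proof (rule sum.cong[OF refl])
      fix k assume "k \<in> {2..<N}"
      then have "ln (real k) > 0" "ln (1 + real k) > 0" by simp_all
      then show "Aw k * \<delta> k = u k + R k * \<delta> k"
        unfolding u_def R_def \<delta>_def by (simp add: field_simps)
    qed
    also have "\<dots> = (\<Sum>k\<in>{2..<N}. u k) + (\<Sum>k\<in>{2..<N}. R k * \<delta> k)" by (simp add: sum.distrib)
    also have "(\<Sum>k\<in>{2..<N}. u k) = (\<Sum>k\<in>{2..<N}. ln (ln (real (Suc k))) - ln (ln (real k))) - (\<Sum>k\<in>{2..<N}. v k)"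
    proof -
      have "(\<Sum>k\<in>{2..<N}. u k) = (\<Sum>k\<in>{2..<N}. (ln (ln (real (Suc k))) - ln (ln (real k))) - v k)"
      proof (rule sum.cong[OF refl])
        fix k assume "k \<in> {2..<N}"
        then have k: "k \<ge> 2" by simp
        show "u k = ln (ln (real (Suc k))) - ln (ln (real k)) - v k"
          using u_bounds(4)[OF k, folded u_def] unfolding v_def by simp
      qed
      then show ?thesis by (simp add: sum_subtractf)
    qed
    also have "(\<Sum>k\<in>{2..<N}. ln (ln (real (Suc k))) - ln (ln (real k))) = ln (ln (real N)) - ln (ln 2)"
      using sum_Suc_diff'[OF N, of "\<lambda>k. ln (ln (real k))"] by simp
    finally have sumeq: "(\<Sum>k\<in>{2..<N}. Aw k * \<delta> k) = ln (ln (real N)) - ln (ln 2) - (\<Sum>k\<in>{2..<N}. v k) + (\<Sum>k\<in>{2..<N}. R k * \<delta> k)" .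
    have "Aw N / ln (real N) = 1 + R N / ln (real N)" unfolding R_def using lnN by (simp add: field_simps)
    then have "Sr N = 1 + R N / ln (real N) + (ln (ln (real N)) - ln (ln 2) - (\<Sum>k\<in>{2..<N}. v k) + (\<Sum>k\<in>{2..<N}. R k * \<delta> k))"
      using abel_Sr2[OF N] sumeq unfolding \<delta>_def by simp
    then have eq: "Sr N - ln (ln (real N)) - B = R N / ln (real N) - ((\<Sum>k\<in>{2..<N}. v k) - L2) + ((\<Sum>k\<in>{2..<N}. R k * \<delta> k) - L1)"
      unfolding B_def by simp
    have b1: "\<bar>R N / ln (real N)\<bar> \<le> C / ln (real N)"
      using C[of N] N lnN unfolding R_def by (simp add: abs_div divide_right_mono)
    have "4 / real N \<le> 4 / ln (real N)"
    proof -
      have "ln (real N) \<le> real N - 1" using N by (intro ln_le_minus_one) auto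
      then show ?thesis using lnN by (intro divide_left_mono) auto
    qed
    with L2[OF N] have b2: "\<bar>(\<Sum>k\<in>{2..<N}. v k) - L2\<bar> \<le> 4 / ln (real N)" by simp
    have "\<bar>Sr N - ln (ln (real N)) - B\<bar> \<le> C / ln (real N) + 4 / ln (real N) + C / ln (real N)"
      unfolding eq using b1 b2 L1[OF N] by linarith
    also have "\<dots> = (2 * C + 4) / ln (real N)" by (simp add: add_divide_distrib)
    finally show "\<bar>Sr N - ln (ln (real N)) - B\<bar> \<le> (2 * C + 4) / ln (real N)" .
  qed
qed



lemma strict_mono_le_iff_Least:
  fixes f :: "nat \<Rightarrow> nat"
  assumes "strict_mono f"
  shows "f k \<le> N \<longleftrightarrow> k < (LEAST k. N < f k)"
proof -
  have ex: "N < f (Suc N)" using strict_mono_imp_increasing[OF assms, of "Suc N"] by simp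
  define n where "n = (LEAST k. N < f k)"
  have n1: "N < f n" unfolding n_def by (rule LeastI[of "\<lambda>k. N < f k", OF ex])
  show ?thesis
  proof
    assume "f k \<le> N"
    then have "f k < f n" using n1 by simp
    then show "k < (LEAST k. N < f k)" unfolding n_def[symmetric] using assms strict_mono_less by blast
  next
    assume "k < (LEAST k. N < f k)"
    then have "\<not> N < f k" by (rule not_less_Least)
    then show "f k \<le> N" by simp
  qed
qed

lemma range_le_image:
  fixes f :: "nat \<Rightarrow> nat"
  assumes "strict_mono f"
  shows "{x\<in>range f. x \<le> N} = f ` {..<(LEAST k. N < f k)}"
  using strict_mono_le_iff_Least[OF assms] by auto

lemma sum_range_le:
  fixes f :: "nat \<Rightarrow> nat" and g :: "nat \<Rightarrow> real"
  assumes "strict_mono f"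
  shows "(\<Sum>x\<in>{x\<in>range f. x \<le> N}. g x) = (\<Sum>k<(LEAST k. N < f k). g (f k))"
proof -
  have "inj f" using assms by (rule strict_mono_imp_inj_on)
  then have "inj_on f {..<(LEAST k. N < f k)}" by (meson inj_on_subset subset_UNIV)
  then show ?thesis unfolding range_le_image[OF assms] by (simp add: sum.reindex)
qed

lemma primes_range: "{p. prime p} = range nth_prime"
  using prime_nth_prime prime_is_nth_prime by blast

lemma Sr_nth: "Sr N = (\<Sum>k<(LEAST k. N < nth_prime k). 1 / real (nth_prime k))"
proof -
  have "{p. prime p \<and> p \<le> N} = {x\<in>range nth_prime. x \<le> N}" using primes_range by auto
  then show ?thesis unfolding Sr_def using sum_range_le[OF strict_mono_nth_prime] by simp
qed

lemma interleave_sum: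
  fixes b :: "nat \<Rightarrow> real"
  shows "(\<Sum>j<J. \<Sum>t<r. b (s + j * r + t)) = (\<Sum>k\<in>{s..<s + J * r}. b k)"
proof (induction J)
  case 0 then show ?case by simp
next
  case (Suc J)
  have "{s..<s + Suc J * r} = {s..<s + J * r} \<union> {s + J * r..<s + J * r + r}" by auto
  then have "(\<Sum>k\<in>{s..<s + Suc J * r}. b k) = (\<Sum>k\<in>{s..<s + J * r}. b k) + (\<Sum>k\<in>{s + J * r..<s + J * r + r}. b k)"
    by (simp add: sum.union_disjoint ivl_disj_int)
  also have "(\<Sum>k\<in>{s + J * r..<s + J * r + r}. b k) = (\<Sum>t<r. b (s + J * r + t))"
    using sum.atLeastLessThan_shift_0[of b "s + J * r" "s + J * r + r"]
    by (simp add: comp_def atLeast0LessThan)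
  finally show ?case using Suc by simp
qed

lemma inv_le_inv_ln: "N \<ge> 2 \<Longrightarrow> 1 / real N \<le> 1 / ln (real N)"
proof -
  assume N: "N \<ge> 2"
  have "ln (real N) \<le> real N - 1" using N by (intro ln_le_minus_one) auto
  moreover have "ln (real N) > 0" using N by simp
  ultimately show ?thesis by (intro divide_left_mono) auto
qed

lemma nth_prime_inv_le: "1 / real (nth_prime k) \<le> 1 / (real k + 2)"
  using nth_prime_ge[of k] by (intro divide_left_mono) auto

lemma nth_prime_inv_antimono: "k \<le> k' \<Longrightarrow> 1 / real (nth_prime k') \<le> 1 / real (nth_prime k)"
  using prime_gt_0_nat[OF prime_nth_prime[of k]] prime_gt_0_nat[OF prime_nth_prime[of k']] by (intro divide_left_mono) auto

lemma mertensM: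
  fixes r s :: nat
  assumes r: "r \<ge> 1"
  defines "Q \<equiv> \<lambda>j. nth_prime (s + j * r)"
  shows "\<exists>c E. \<forall>N \<ge> max 2 (Q 0). \<bar>(\<Sum>j<(LEAST j. N < Q j). 1 / real (Q j)) - ln (ln (real N)) / real r - c\<bar> \<le> E / ln (real N)"
proof -
  define b where "b k = 1 / real (nth_prime k)" for k
  have b_anti: "k \<le> k' \<Longrightarrow> b k' \<le> b k" for k k' unfolding b_def by (rule nth_prime_inv_antimono)
  have b_pos: "b k > 0" for k unfolding b_def using prime_gt_0_nat[OF prime_nth_prime[of k]] by simp
  have smQ: "strict_mono Q" unfolding Q_def strict_mono_def using r by simp
  obtain B E where BE: "\<And>N. N \<ge> 2 \<Longrightarrow> \<bar>Sr N - ln (ln (real N)) - B\<bar> \<le> E / ln (real N)"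
    using mertens2 by blast
  define d where "d j = real r * b (s + j * r) - (\<Sum>t<r. b (s + j * r + t))" for j
  define h where "h j = real r * b (s + j * r)" for j
  have d_nonneg: "0 \<le> d j" for j
  proof -
    have "(\<Sum>t<r. b (s + j * r + t)) \<le> (\<Sum>t<r. b (s + j * r))" by (intro sum_mono b_anti) simp
    then show ?thesis unfolding d_def by simp
  qed
  have d_le: "d j \<le> h j - h (Suc j)" for j
  proof -
    have "(\<Sum>t<r. b (s + Suc j * r)) \<le> (\<Sum>t<r. b (s + j * r + t))" by (intro sum_mono b_anti) simp
    then show ?thesis unfolding d_def h_def by simp
  qed
  have h_lim: "h \<longlonglongrightarrow> 0"
  proof (rule Lim_null_comparison)
    show "\<forall>\<^sub>F j in sequentially. norm (h j) \<le> real r / (real j + 2)"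
    proof (intro always_eventually allI)
      fix j
      have "norm (h j) = real r * b (s + j * r)" unfolding h_def using b_pos[of "s + j * r"] by (simp add: abs_mult)
      also have "\<dots> \<le> real r * (1 / (real (s + j * r) + 2))"
        unfolding b_def by (intro mult_left_mono nth_prime_inv_le) auto
      also have "\<dots> \<le> real r * (1 / (real j + 2))"
      proof (intro mult_left_mono divide_left_mono)
        have "j \<le> s + j * r" using r by (metis le_add2 mult.right_neutral mult_le_mono2 trans_le_add2)
        then have "real j \<le> real (s + j * r)" by (simp only: of_nat_le_iff)
        then show "real j + 2 \<le> real (s + j * r) + 2" by simp
      qed (auto intro!: mult_pos_pos add_nonneg_pos)
      finally show "norm (h j) \<le> real r / (real j + 2)" by simp
    qed
    show "(\<lambda>j. real r / (real j + 2)) \<longlonglongrightarrow> 0" by real_asymp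
  qed
  have "\<exists>L. \<forall>J\<ge>0. \<bar>(\<Sum>j\<in>{0..<J}. d j) - L\<bar> \<le> h J"
    by (rule tail_bound) (use d_nonneg d_le h_lim in auto)
  then obtain D where D: "\<And>J. \<bar>(\<Sum>j<J. d j) - D\<bar> \<le> h J" by (auto simp: atLeast0LessThan)
  define c where "c = (B - (\<Sum>k<s. b k) + D) / real r"
  show ?thesis
  proof (intro exI allI impI)
    fix N assume N: "N \<ge> max 2 (Q 0)"
    then have N2: "N \<ge> 2" and NQ: "Q 0 \<le> N" by auto
    define J where "J = (LEAST j. N < Q j)"
    define n where "n = (LEAST k. N < nth_prime k)"
    have Qiff: "Q j \<le> N \<longleftrightarrow> j < J" for j unfolding J_def by (rule strict_mono_le_iff_Least[OF smQ])
    have Piff: "nth_prime k \<le> N \<longleftrightarrow> k < n" for k unfolding n_def by (rule strict_mono_le_iff_Least[OF strict_mono_nth_prime])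
    have J0: "J > 0" using Qiff[of 0] NQ by simp
    have QJ: "N < Q J" using Qiff[of J] by simp
    have "Q (J - 1) \<le> N" using Qiff[of "J - 1"] J0 by simp
    then have n1: "s + (J - 1) * r < n" using Piff unfolding Q_def by simp
    have n2: "n \<le> s + J * r" using QJ Piff[of "s + J * r"] unfolding Q_def by simp
    have n3: "s + J * r < n + r"
    proof -
      have "s + J * r = s + (J - 1) * r + r" using J0 by (cases J) auto
      with n1 show ?thesis by simp
    qed
    define SM where "SM = (\<Sum>j<J. 1 / real (Q j))"
    have SMb: "SM = (\<Sum>j<J. b (s + j * r))" unfolding SM_def b_def Q_def by simp
    have "real r * SM = (\<Sum>j<J. (\<Sum>t<r. b (s + j * r + t)) + d j)"
      unfolding SMb d_def by (simp add: sum_distrib_left)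
    also have "\<dots> = (\<Sum>k\<in>{s..<s + J * r}. b k) + (\<Sum>j<J. d j)"
      by (simp add: sum.distrib interleave_sum)
    also have "(\<Sum>k\<in>{s..<s + J * r}. b k) = (\<Sum>k<s + J * r. b k) - (\<Sum>k<s. b k)"
    proof -
      have eqS: "{..<s + J * r} = {..<s} \<union> {s..<s + J * r}" by auto
      have "(\<Sum>k<s + J * r. b k) = sum b ({..<s} \<union> {s..<s + J * r})" by (simp only: eqS)
      also have "\<dots> = (\<Sum>k<s. b k) + (\<Sum>k\<in>{s..<s + J * r}. b k)"
        by (rule sum.union_disjoint) auto
      finally have "(\<Sum>k<s + J * r. b k) = (\<Sum>k<s. b k) + (\<Sum>k\<in>{s..<s + J * r}. b k)" .
      then show ?thesis by simp
    qed
    also have "(\<Sum>k<s + J * r. b k) = (\<Sum>k<n. b k) + (\<Sum>k\<in>{n..<s + J * r}. b k)"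
    proof -
      have eqS: "{..<s + J * r} = {..<n} \<union> {n..<s + J * r}" using n2 by auto
      have "(\<Sum>k<s + J * r. b k) = sum b ({..<n} \<union> {n..<s + J * r})" by (simp only: eqS)
      also have "\<dots> = (\<Sum>k<n. b k) + (\<Sum>k\<in>{n..<s + J * r}. b k)"
        by (rule sum.union_disjoint) auto
      finally show ?thesis .
    qed
    also have "(\<Sum>k<n. b k) = Sr N" unfolding Sr_nth b_def n_def by simp
    finally have eq1: "real r * SM = Sr N + (\<Sum>k\<in>{n..<s + J * r}. b k) - (\<Sum>k<s. b k) + (\<Sum>j<J. d j)" by simp
    define X where "X = (\<Sum>k\<in>{n..<s + J * r}. b k)"
    have X0: "X \<ge> 0" unfolding X_def using b_pos by (intro sum_nonneg) (auto intro: less_imp_le)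
    have "X \<le> (\<Sum>k\<in>{n..<s + J * r}. 1 / real N)"
      unfolding X_def
    proof (rule sum_mono)
      fix k assume "k \<in> {n..<s + J * r}"
      then have "N < nth_prime k" using Piff[of k] by simp
      then show "b k \<le> 1 / real N" unfolding b_def using N2 by (intro divide_left_mono) auto
    qed
    also have "\<dots> = real (s + J * r - n) / real N" by simp
    also have "\<dots> \<le> real r / real N" using n3 N2 by (intro divide_right_mono) auto
    finally have X1: "X \<le> real r / real N" .
    have hJ: "h J \<le> real r / real N"
      unfolding h_def b_def using QJ N2 unfolding Q_def by (simp add: divide_left_mono)
    have "real r * (SM - ln (ln (real N)) / real r - c) =
        (Sr N - ln (ln (real N)) - B) + X + ((\<Sum>j<J. d j) - D)"
    proof -
      have r0: "real r > 0" using r by simp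
      have "real r * (SM - ln (ln (real N)) / real r - c) = real r * SM - ln (ln (real N)) - (B - (\<Sum>k<s. b k) + D)"
        unfolding c_def using r0 by (simp add: right_diff_distrib)
      then show ?thesis using eq1 unfolding X_def by linarith
    qed
    also have "\<bar>\<dots>\<bar> \<le> E / ln (real N) + real r / real N + real r / real N"
      using BE[OF N2] X0 X1 D[of J] hJ by linarith
    also have "\<dots> \<le> E / ln (real N) + real r / ln (real N) + real r / ln (real N)"
      using inv_le_inv_ln[OF N2] r
      by (intro add_mono order_refl) (simp_all add: divide_inverse mult_left_mono)
    also have "\<dots> = real r * ((E + 2 * real r) / real r / ln (real N))"
    proof -
      have "ln (real N) > 0" "real r > 0" using N2 r by auto
      then show ?thesis by (simp add: field_simps)
    qed
    finally have fin: "\<bar>real r * (SM - ln (ln (real N)) / real r - c)\<bar> \<le> real r * ((E + 2 * real r) / real r / ln (real N))" .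
    have ea: "\<bar>real r * (SM - ln (ln (real N)) / real r - c)\<bar> = real r * \<bar>SM - ln (ln (real N)) / real r - c\<bar>"
      by (simp add: abs_mult)
    from fin have "real r * \<bar>SM - ln (ln (real N)) / real r - c\<bar> \<le> real r * ((E + 2 * real r) / real r / ln (real N))"
      unfolding ea .
    then have "\<bar>SM - ln (ln (real N)) / real r - c\<bar> \<le> (E + 2 * real r) / real r / ln (real N)"
      by (rule mult_left_le_imp_le) (use r in simp)
    then show "\<bar>(\<Sum>j<(LEAST j. N < Q j). 1 / real (Q j)) - ln (ln (real N)) / real r - c\<bar> \<le> (E + 2 * real r) / real r / ln (real N)"
      unfolding SM_def J_def by simp
  qed
qed



lemma logprodM:
  fixes r s :: nat
  assumes r: "r \<ge> 1"
  shows "\<exists>\<gamma> E. \<forall>N \<ge> max 2 (nth_prime s). \<bar>(\<Sum>j<(LEAST j. N < nth_prime (s + j * r)). ln (1 - 1 / real (nth_prime (s + j * r)))) + ln (ln (real N)) / real r + \<gamma>\<bar> \<le> E / ln (real N)"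
proof -
  define Q where "Q j = nth_prime (s + j * r)" for j
  obtain c E where cE: "\<And>N. N \<ge> max 2 (Q 0) \<Longrightarrow> \<bar>(\<Sum>j<(LEAST j. N < Q j). 1 / real (Q j)) - ln (ln (real N)) / real r - c\<bar> \<le> E / ln (real N)"
    using mertensM[OF r, of s] unfolding Q_def by blast
  have Q2: "real (Q j) \<ge> 2" for j unfolding Q_def using prime_ge_2_nat[OF prime_nth_prime] by (metis of_nat_numeral of_nat_le_iff)
  have QS: "real (Q (Suc j)) \<ge> real (Q j) + 1" for j
  proof -
    have "Q j < Q (Suc j)" unfolding Q_def using r by simp
    then show ?thesis by simp
  qed
  define g where "g j = - ln (1 - 1 / real (Q j)) - 1 / real (Q j)" for j
  define h where "h j = 2 / (real (Q j) - 1)" for j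
  have g0: "0 \<le> g j" and g1: "g j \<le> 2 * (1 / real (Q j))^2" for j
  proof -
    have "0 \<le> 1 / real (Q j)" "1 / real (Q j) \<le> 1/2" using Q2[of j] by auto
    from v_bounds[OF this] show "0 \<le> g j" "g j \<le> 2 * (1 / real (Q j))^2" unfolding g_def by auto
  qed
  have g_le: "\<bar>g j\<bar> \<le> h j - h (Suc j)" for j
  proof -
    define p where "p = real (Q j)"
    have p2: "p \<ge> 2" unfolding p_def by (rule Q2)
    have "h (Suc j) \<le> 2 / p" unfolding h_def p_def using QS[of j] Q2[of j] by (intro divide_left_mono) auto
    moreover have "2 / (p - 1) - 2 / p = 2 / (p * (p - 1))" using p2 by (simp add: field_simps)
    moreover have "2 * (1 / p)^2 = 2 / (p * p)" by (simp add: power2_eq_square)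
    moreover have "2 / (p * p) \<le> 2 / (p * (p - 1))" using p2 by (intro divide_left_mono mult_left_mono) auto
    ultimately show ?thesis using g0[of j] g1[of j] unfolding h_def p_def[symmetric] by simp
  qed
  have h_lim: "h \<longlonglongrightarrow> 0"
  proof (rule Lim_null_comparison)
    show "\<forall>\<^sub>F j in sequentially. norm (h j) \<le> 2 / (real j + 1)"
    proof (intro always_eventually allI)
      fix j
      have "j \<le> s + j * r" using r by (metis le_add2 mult.right_neutral mult_le_mono2 trans_le_add2)
      then have "real (Q j) \<ge> real j + 2" unfolding Q_def using nth_prime_ge[of "s + j * r"] by linarith
      then have "real j + 1 \<le> real (Q j) - 1" by simp
      then have "2 / (real (Q j) - 1) \<le> 2 / (real j + 1)" by (intro divide_left_mono) auto
      moreover have "h j \<ge> 0" unfolding h_def using Q2[of j] by simp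
      ultimately show "norm (h j) \<le> 2 / (real j + 1)" unfolding h_def by simp
    qed
    show "(\<lambda>j. 2 / (real j + 1)) \<longlonglongrightarrow> 0" by real_asymp
  qed
  have "\<exists>L. \<forall>J\<ge>0. \<bar>(\<Sum>j\<in>{0..<J}. g j) - L\<bar> \<le> h J"
    by (rule tail_bound) (use g_le h_lim in auto)
  then obtain G where G: "\<And>J. \<bar>(\<Sum>j<J. g j) - G\<bar> \<le> h J" by (auto simp: atLeast0LessThan)
  show ?thesis
  proof (intro exI allI impI)
    fix N assume N: "N \<ge> max 2 (nth_prime s)"
    then have N2: "N \<ge> 2" and NQ: "N \<ge> max 2 (Q 0)" unfolding Q_def by auto
    define J where "J = (LEAST j. N < Q j)"
    have smQ: "strict_mono Q" unfolding Q_def strict_mono_def using r by simp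
    have "Q J \<le> N \<longleftrightarrow> J < J" unfolding J_def by (rule strict_mono_le_iff_Least[OF smQ])
    then have QJ: "N < Q J" by simp
    have hJ: "h J \<le> 2 / ln (real N)"
    proof -
      have "real N \<le> real (Q J) - 1" using QJ by simp
      then have "h J \<le> 2 / real N" unfolding h_def using N2 by (intro divide_left_mono) auto
      also have "\<dots> \<le> 2 / ln (real N)" using inv_le_inv_ln[OF N2] by (simp add: divide_inverse)
      finally show ?thesis .
    qed
    have "(\<Sum>j<J. ln (1 - 1 / real (Q j))) = - (\<Sum>j<J. 1 / real (Q j)) - (\<Sum>j<J. g j)"
      unfolding g_def by (simp add: sum_subtractf sum_negf)
    then have eq: "(\<Sum>j<J. ln (1 - 1 / real (Q j))) + ln (ln (real N)) / real r + (c + G) =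
       - ((\<Sum>j<J. 1 / real (Q j)) - ln (ln (real N)) / real r - c) - ((\<Sum>j<J. g j) - G)" by simp
    have "\<bar>(\<Sum>j<J. ln (1 - 1 / real (Q j))) + ln (ln (real N)) / real r + (c + G)\<bar> \<le> E / ln (real N) + 2 / ln (real N)"
      unfolding eq using cE[OF NQ, folded J_def] G[of J] hJ by linarith
    also have "\<dots> = (E + 2) / ln (real N)" by (simp add: add_divide_distrib)
    finally show "\<bar>(\<Sum>j<(LEAST j. N < nth_prime (s + j * r)). ln (1 - 1 / real (nth_prime (s + j * r)))) + ln (ln (real N)) / real r + (c + G)\<bar> \<le> (E + 2) / ln (real N)"
      unfolding J_def Q_def by simp
  qed
qed



lemma exp_minus_one_bound:
  fixes F :: real
  assumes "\<bar>F\<bar> \<le> 1"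
  shows "\<bar>exp F - 1\<bar> \<le> 3 * \<bar>F\<bar>"
proof -
  have lo: "1 - exp F \<le> \<bar>F\<bar>" using exp_ge_add_one_self[of F] by linarith
  have "1 - exp (- F) \<le> \<bar>F\<bar>" using exp_ge_add_one_self[of "-F"] by linarith
  then have "exp F * (1 - exp (- F)) \<le> exp F * \<bar>F\<bar>" by (intro mult_left_mono) auto
  then have "exp F - 1 \<le> exp F * \<bar>F\<bar>" by (simp add: algebra_simps exp_minus_inverse)
  also have "\<dots> \<le> 3 * \<bar>F\<bar>"
  proof (intro mult_right_mono)
    have "exp F \<le> exp 1" using assms by simp
    then show "exp F \<le> 3" using exp_le by linarith
  qed simp
  finally show ?thesis using lo by linarith
qed

lemma final_asymp:
  fixes L :: "real \<Rightarrow> real" and r :: nat and \<gamma> K :: real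
  assumes r: "r \<ge> 1"
    and ev: "eventually (\<lambda>x. \<bar>L x + ln (ln x) / real r + \<gamma>\<bar> \<le> K / ln x) at_top"
  shows "(\<lambda>x. exp (L x) - exp (- \<gamma>) / ln x powr (1 / real r)) \<in> O(\<lambda>x. 1 / ln x powr (1 + 1 / real r))"
    and "(\<lambda>x. exp (- L x) - exp \<gamma> * ln x powr (1 / real r)) \<in> O(\<lambda>x. ln x powr (1 / real r - 1))"
proof -
  define F where "F x = L x + ln (ln x) / real r + \<gamma>" for x
  have ev2: "eventually (\<lambda>x. x \<ge> max 3 (exp (\<bar>K\<bar> + 1))) at_top" by (rule eventually_ge_at_top)
  have key: "eventually (\<lambda>x. ln x > 0 \<and> \<bar>F x\<bar> \<le> \<bar>K\<bar> / ln x \<and> \<bar>F x\<bar> \<le> 1) at_top"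
    using ev ev2
  proof eventually_elim
    case (elim x)
    have x3: "x \<ge> 3" and xe: "x \<ge> exp (\<bar>K\<bar> + 1)" using elim(2) by auto
    have lx: "ln x > 0" using x3 by simp
    have "ln (exp (\<bar>K\<bar> + 1)) \<le> ln x" using xe x3 by (subst ln_le_cancel_iff) auto
    then have lK: "ln x \<ge> \<bar>K\<bar> + 1" by simp
    have "K / ln x \<le> \<bar>K\<bar> / ln x" using lx by (intro divide_right_mono) auto
    then have b1: "\<bar>F x\<bar> \<le> \<bar>K\<bar> / ln x" using elim(1) unfolding F_def by linarith
    have "\<bar>K\<bar> / ln x \<le> 1" using lK lx by (simp add: divide_le_eq)
    then have "\<bar>F x\<bar> \<le> 1" using b1 by linarith
    with b1 lx show ?case by simp
  qed
  have powr_eq: "ln x powr (1 / real r) = exp (ln (ln x) / real r)" if "ln x > 0" for x :: real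
    using that by (simp add: powr_def)
  show "(\<lambda>x. exp (L x) - exp (- \<gamma>) / ln x powr (1 / real r)) \<in> O(\<lambda>x. 1 / ln x powr (1 + 1 / real r))"
  proof (rule bigoI)
    show "eventually (\<lambda>x. norm (exp (L x) - exp (- \<gamma>) / ln x powr (1 / real r)) \<le> (3 * \<bar>K\<bar> * exp (- \<gamma>)) * norm (1 / ln x powr (1 + 1 / real r))) at_top"
      using key
    proof eventually_elim
      case (elim x)
      then have lx: "ln x > 0" and b1: "\<bar>F x\<bar> \<le> \<bar>K\<bar> / ln x" and b2: "\<bar>F x\<bar> \<le> 1" by auto
      define a where "a = ln x powr (1 / real r)"
      have a0: "a > 0" unfolding a_def using lx by simp
      have aeq: "a = exp (ln (ln x) / real r)" unfolding a_def by (rule powr_eq[OF lx])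
      have Lx: "L x = (- \<gamma> + - (ln (ln x) / real r)) + F x" unfolding F_def by simp
      have "exp (L x) = exp (- \<gamma>) * exp (- (ln (ln x) / real r)) * exp (F x)"
        by (subst Lx) (simp only: exp_add)
      also have "exp (- (ln (ln x) / real r)) = 1 / a" unfolding aeq by (simp add: exp_minus_inverse divide_inverse exp_minus)
      finally have eL: "exp (L x) = exp (- \<gamma>) / a * exp (F x)" by simp
      have "exp (L x) - exp (- \<gamma>) / ln x powr (1 / real r) = exp (- \<gamma>) / a * (exp (F x) - 1)"
        unfolding eL a_def[symmetric] by (simp add: right_diff_distrib)
      then have "norm (exp (L x) - exp (- \<gamma>) / ln x powr (1 / real r)) = exp (- \<gamma>) / a * \<bar>exp (F x) - 1\<bar>"
        using a0 by (simp add: abs_mult)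
      also have "\<dots> \<le> exp (- \<gamma>) / a * (3 * (\<bar>K\<bar> / ln x))"
        using exp_minus_one_bound[OF b2] b1 a0 by (intro mult_left_mono) auto
      also have "\<dots> = (3 * \<bar>K\<bar> * exp (- \<gamma>)) * (1 / (ln x * a))" by (simp add: field_simps)
      also have "ln x * a = ln x powr (1 + 1 / real r)" unfolding a_def using lx by (simp add: powr_add)
      also have "1 / ln x powr (1 + 1 / real r) = norm (1 / ln x powr (1 + 1 / real r))" by simp
      finally show ?case .
    qed
  qed
  show "(\<lambda>x. exp (- L x) - exp \<gamma> * ln x powr (1 / real r)) \<in> O(\<lambda>x. ln x powr (1 / real r - 1))"
  proof (rule bigoI)
    show "eventually (\<lambda>x. norm (exp (- L x) - exp \<gamma> * ln x powr (1 / real r)) \<le> (3 * \<bar>K\<bar> * exp \<gamma>) * norm (ln x powr (1 / real r - 1))) at_top"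
      using key
    proof eventually_elim
      case (elim x)
      then have lx: "ln x > 0" and b1: "\<bar>F x\<bar> \<le> \<bar>K\<bar> / ln x" and b2: "\<bar>F x\<bar> \<le> 1" by auto
      have b2': "\<bar>- F x\<bar> \<le> 1" using b2 by simp
      define a where "a = ln x powr (1 / real r)"
      have a0: "a > 0" unfolding a_def using lx by simp
      have aeq: "a = exp (ln (ln x) / real r)" unfolding a_def by (rule powr_eq[OF lx])
      have Lx: "- L x = (\<gamma> + ln (ln x) / real r) + - F x" unfolding F_def by simp
      have eL: "exp (- L x) = exp \<gamma> * a * exp (- F x)"
        unfolding aeq by (subst Lx) (simp only: exp_add)
      have "exp (- L x) - exp \<gamma> * ln x powr (1 / real r) = exp \<gamma> * a * (exp (- F x) - 1)"
        unfolding eL a_def[symmetric] by (simp add: algebra_simps)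
      then have "norm (exp (- L x) - exp \<gamma> * ln x powr (1 / real r)) = exp \<gamma> * a * \<bar>exp (- F x) - 1\<bar>"
        using a0 by (simp add: abs_mult)
      also have "\<dots> \<le> exp \<gamma> * a * (3 * (\<bar>K\<bar> / ln x))"
        using exp_minus_one_bound[OF b2'] b1 a0 by (intro mult_left_mono) auto
      also have "\<dots> = (3 * \<bar>K\<bar> * exp \<gamma>) * (a / ln x)" by (simp add: field_simps)
      also have "a / ln x = ln x powr (1 / real r - 1)" unfolding a_def using lx by (simp add: powr_diff)
      also have "ln x powr (1 / real r - 1) = norm (ln x powr (1 / real r - 1))" by simp
      finally show ?case .
    qed
  qed
qed



lemma arith_list_range:
  assumes "1 \<le> r0"
  shows "arith_list r r0 = range (\<lambda>j. nth_prime (r0 - 1 + j * r))"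
proof -
  have "r0 + j * r - 1 = r0 - 1 + j * r" for j using assms by simp
  then show ?thesis unfolding arith_list_def by auto
qed

lemma real_le_floor_iff: "x \<ge> 0 \<Longrightarrow> real p \<le> x \<longleftrightarrow> p \<le> nat \<lfloor>x\<rfloor>"
proof -
  assume x: "x \<ge> 0"
  then have "\<lfloor>x\<rfloor> \<ge> 0" by simp
  then have "p \<le> nat \<lfloor>x\<rfloor> \<longleftrightarrow> int p \<le> \<lfloor>x\<rfloor>" by (simp add: le_nat_iff)
  also have "\<dots> \<longleftrightarrow> real p \<le> x" by (simp add: le_floor_iff)
  finally show ?thesis by simp
qed

lemma lnln_close:
  fixes x :: real and N :: nat
  assumes N: "N \<ge> 2" and x: "real N \<le> x" "x < real N + 1"
  shows "0 \<le> ln (ln x) - ln (ln (real N))" "ln (ln x) - ln (ln (real N)) \<le> 2 / ln x"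
    "1 / ln (real N) \<le> 2 / ln x"
proof -
  have lN: "ln (real N) > 0" using N by simp
  have lNx: "ln (real N) \<le> ln x" using x N by (subst ln_le_cancel_iff) auto
  have lx: "ln x > 0" using lN lNx by linarith
  show "0 \<le> ln (ln x) - ln (ln (real N))" using lN lNx by simp
  have "x \<le> real N * real N"
  proof -
    have N2r: "real N \<ge> 2" using N by simp
    then have "2 * real N \<le> real N * real N" by (intro mult_right_mono) auto
    then have "real N + 1 \<le> real N * real N" using N2r by linarith
    with x show ?thesis by simp
  qed
  then have "ln x \<le> ln (real N * real N)" using x N by (subst ln_le_cancel_iff) auto
  also have "\<dots> = 2 * ln (real N)" using N by (simp add: ln_mult)
  finally have lx2: "ln x \<le> 2 * ln (real N)" .
  show inv: "1 / ln (real N) \<le> 2 / ln x" using lx2 lN lx by (simp add: field_simps)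
  have "ln x - ln (real N) = ln (x / real N)" using x N by (simp add: ln_div)
  also have "\<dots> \<le> x / real N - 1" using x N by (intro ln_le_minus_one) auto
  also have "\<dots> \<le> 1" using x N by (simp add: field_simps)
  finally have d1: "ln x - ln (real N) \<le> 1" .
  have "ln (ln x) - ln (ln (real N)) = ln (ln x / ln (real N))" using lN lx by (simp add: ln_div)
  also have "\<dots> \<le> ln x / ln (real N) - 1" using lN lx by (intro ln_le_minus_one) auto
  also have "\<dots> = (ln x - ln (real N)) / ln (real N)" using lN by (simp add: field_simps)
  also have "\<dots> \<le> 1 / ln (real N)" using d1 lN by (intro divide_right_mono) auto
  also have "\<dots> \<le> 2 / ln x" by (rule inv)
  finally show "ln (ln x) - ln (ln (real N)) \<le> 2 / ln x" .
qed

theorem mainTheorem16: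
  fixes r r0 :: nat
  assumes "1 \<le> r" and "1 \<le> r0" and "r0 \<le> r"
  defines "M \<equiv> arith_list r r0"
  shows "\<exists>\<gamma>::real.
    (\<lambda>x::real. (\<Prod>p\<in>{p\<in>M. real p \<le> x}. 1 - 1 / real p)
        - exp (- \<gamma>) / ln x powr (1 / real r))
      \<in> O[at_top](\<lambda>x. 1 / ln x powr (1 + 1 / real r)) \<and>
    (\<lambda>x::real. (\<Prod>p\<in>{p\<in>M. real p \<le> x}. inverse (1 - 1 / real p))
        - exp \<gamma> * ln x powr (1 / real r))
      \<in> O[at_top](\<lambda>x. ln x powr (1 / real r - 1))"
proof -
  define s where "s = r0 - 1"
  define Q where "Q j = nth_prime (s + j * r)" for j
  have r: "r \<ge> 1" using assms(1) .
  have MQ: "M = range Q" unfolding M_def Q_def s_def using arith_list_range[OF assms(2)] by simp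
  have smQ: "strict_mono Q" unfolding Q_def strict_mono_def using r by simp
  obtain \<gamma> E where gE: "\<And>N. N \<ge> max 2 (nth_prime s) \<Longrightarrow> \<bar>(\<Sum>j<(LEAST j. N < nth_prime (s + j * r)). ln (1 - 1 / real (nth_prime (s + j * r)))) + ln (ln (real N)) / real r + \<gamma>\<bar> \<le> E / ln (real N)"
    using logprodM[OF r, of s] by blast
  define L where "L x = (\<Sum>p\<in>{p\<in>M. real p \<le> x}. ln (1 - 1 / real p))" for x :: real
  have M2: "p \<in> M \<Longrightarrow> real p \<ge> 2" for p
    unfolding MQ Q_def using prime_ge_2_nat[OF prime_nth_prime] by (auto simp: numeral_le_iff)
  have ev: "eventually (\<lambda>x. \<bar>L x + ln (ln x) / real r + \<gamma>\<bar> \<le> (2 * \<bar>E\<bar> + 2) / ln x) at_top"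
    using eventually_ge_at_top[of "real (max 2 (nth_prime s))"]
  proof eventually_elim
    case (elim x)
    define N where "N = nat \<lfloor>x\<rfloor>"
    have x0: "x \<ge> 0" using elim by linarith
    have NN: "N \<ge> max 2 (nth_prime s)" unfolding N_def using elim
      using real_le_floor_iff[OF x0] by blast
    then have N2: "N \<ge> 2" by simp
    have xN: "real N \<le> x" "x < real N + 1" unfolding N_def using x0 by linarith+
    note cl = lnln_close[OF N2 xN]
    have "real N \<ge> 2" using N2 by simp
    then have lx: "ln x > 0" using xN by simp
    have setq: "{p\<in>M. real p \<le> x} = {p\<in>range Q. p \<le> N}" unfolding MQ N_def using real_le_floor_iff[OF x0] by blast
    have LN: "L x = (\<Sum>j<(LEAST j. N < Q j). ln (1 - 1 / real (Q j)))"
      unfolding L_def setq by (rule sum_range_le[OF smQ])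
    have b: "\<bar>L x + ln (ln (real N)) / real r + \<gamma>\<bar> \<le> E / ln (real N)"
      using gE[OF NN] unfolding LN Q_def by simp
    have "E / ln (real N) \<le> \<bar>E\<bar> * (1 / ln (real N))" using N2 by (simp add: divide_inverse mult_right_mono)
    also have "\<dots> \<le> \<bar>E\<bar> * (2 / ln x)" using cl(3) by (intro mult_left_mono) auto
    also have "\<bar>E\<bar> * (2 / ln x) = 2 * \<bar>E\<bar> / ln x" by simp
    finally have b2: "E / ln (real N) \<le> 2 * \<bar>E\<bar> / ln x" .
    have "(ln (ln x) - ln (ln (real N))) / real r \<le> (ln (ln x) - ln (ln (real N))) / 1"
      using cl(1) r by (intro divide_left_mono) auto
    then have b3: "0 \<le> (ln (ln x) - ln (ln (real N))) / real r" "(ln (ln x) - ln (ln (real N))) / real r \<le> 2 / ln x"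
      using cl(1,2) by auto
    have "L x + ln (ln x) / real r + \<gamma> = (L x + ln (ln (real N)) / real r + \<gamma>) + (ln (ln x) - ln (ln (real N))) / real r"
      by (simp add: diff_divide_distrib)
    then have "\<bar>L x + ln (ln x) / real r + \<gamma>\<bar> \<le> 2 * \<bar>E\<bar> / ln x + 2 / ln x"
      using b b2 b3 by linarith
    also have "\<dots> = (2 * \<bar>E\<bar> + 2) / ln x" by (simp add: add_divide_distrib)
    finally show ?case .
  qed
  note fa = final_asymp[OF r ev]
  have P1: "(\<Prod>p\<in>{p\<in>M. real p \<le> x}. 1 - 1 / real p) = exp (L x)" for x
  proof (cases "finite {p\<in>M. real p \<le> x}")
    case True
    have "exp (L x) = (\<Prod>p\<in>{p\<in>M. real p \<le> x}. exp (ln (1 - 1 / real p)))"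
      unfolding L_def using True by (rule exp_sum)
    also have "\<dots> = (\<Prod>p\<in>{p\<in>M. real p \<le> x}. 1 - 1 / real p)"
    proof (rule prod.cong[OF refl])
      fix p assume "p \<in> {p\<in>M. real p \<le> x}"
      then have "real p \<ge> 2" using M2 by auto
      then have "1 - 1 / real p > 0" by (simp add: field_simps)
      then show "exp (ln (1 - 1 / real p)) = 1 - 1 / real p" by simp
    qed
    finally show ?thesis by simp
  qed (simp add: L_def)
  have P2: "(\<Prod>p\<in>{p\<in>M. real p \<le> x}. inverse (1 - 1 / real p)) = exp (- L x)" for x
  proof (cases "finite {p\<in>M. real p \<le> x}")
    case True
    have "exp (- L x) = exp (\<Sum>p\<in>{p\<in>M. real p \<le> x}. - ln (1 - 1 / real p))"
      unfolding L_def by (simp add: sum_negf)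
    also have "\<dots> = (\<Prod>p\<in>{p\<in>M. real p \<le> x}. exp (- ln (1 - 1 / real p)))"
      using True by (rule exp_sum)
    also have "\<dots> = (\<Prod>p\<in>{p\<in>M. real p \<le> x}. inverse (1 - 1 / real p))"
    proof (rule prod.cong[OF refl])
      fix p assume "p \<in> {p\<in>M. real p \<le> x}"
      then have "real p \<ge> 2" using M2 by auto
      then have "1 - 1 / real p > 0" by (simp add: field_simps)
      then show "exp (- ln (1 - 1 / real p)) = inverse (1 - 1 / real p)" by (simp add: exp_minus)
    qed
    finally show ?thesis by simp
  qed (simp add: L_def)
  show ?thesis
    unfolding P1 P2 using fa by (intro exI[of _ \<gamma>]) simp
qed

end
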